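(* Let $\mathfrak{g}$ be a semi-simple real Lie algebra with a faithful finite dimensional real representation $\mathfrak{g}\to\mathrm{End}(W)$, and suppose there is a symmetric bilinear $\mathfrak{g}$-equivariant map $\wedge:W\times W\to W^*$ which does not vanish identically on any $2$-dimensional linear subspace of $W$. Let $\mu:\mathfrak{sl}_2(\mathbf{R})\to\mathfrak{g}$ be an injective Lie algebra morphism. Then every highest weight of the representation $\mathfrak{sl}_2(\mathbf{R})\to\mathfrak{g}\to\mathrm{End}(W)$ is at most $4$, and at most one irreducible summand has highest weight $4$.
   Context: Weights of $\mathfrak{sl}_2(\mathbf{R})$-representations are taken with respect to the Cartan subalgebra of diagonal matrices, normalized so that the irreducible representation of dimension $n+1$ (on homogeneous polynomials of degree $n$ in two variables) has weights $-n,-n+2,\dots,n-2,n$ and highest weight $n$; i.e. weights are the eigenvalues of $\mathrm{diag}(1,-1)$. $W^*$ is the dual representation and equivariance of $\wedge$ means $X\cdot(a\wedge b)=(X\cdot a)\wedge b+a\wedge(X\cdot b)$. *)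

theory Defs
  imports "HOL-Analysis.Analysis"
begin

text \<open>The representation space W is real^'n; End(W) is real^'n^'n acting by *v.
  Since the representation of g is faithful, g is identified with its image,
  a Lie subalgebra of gl(W).\<close>

definition lie_bracket :: "real^'n^'n \<Rightarrow> real^'n^'n \<Rightarrow> real^'n^'n" where
  "lie_bracket A B = A ** B - B ** A"

definition lie_subalgebra :: "(real^'n^'n) set \<Rightarrow> bool" where
  "lie_subalgebra g \<longleftrightarrow> subspace g \<and> (\<forall>A\<in>g. \<forall>B\<in>g. lie_bracket A B \<in> g)"

definition lie_ideal :: "(real^'n^'n) set \<Rightarrow> (real^'n^'n) set \<Rightarrow> bool" where
  "lie_ideal g I \<longleftrightarrow> subspace I \<and> I \<subseteq> g \<and> (\<forall>A\<in>g. \<forall>B\<in>I. lie_bracket A B \<in> I)"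

definition derived_alg :: "(real^'n^'n) set \<Rightarrow> (real^'n^'n) set" where
  "derived_alg I = span {lie_bracket A B | A B. A \<in> I \<and> B \<in> I}"

definition lie_solvable :: "(real^'n^'n) set \<Rightarrow> bool" where
  "lie_solvable I \<longleftrightarrow> (\<exists>k. (derived_alg ^^ k) I = {0})"

definition semisimple :: "(real^'n^'n) set \<Rightarrow> bool" where
  "semisimple g \<longleftrightarrow> lie_subalgebra g \<and> (\<forall>I. lie_ideal g I \<and> lie_solvable I \<longrightarrow> I = {0})"

definition sl2 :: "(real^2^2) set" where
  "sl2 = {M. M$1$1 + M$2$2 = 0}"

definition sl2_bracket :: "real^2^2 \<Rightarrow> real^2^2 \<Rightarrow> real^2^2" where
  "sl2_bracket X Y = X ** Y - Y ** X"

definition sl2_H :: "real^2^2" where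
  "sl2_H = (\<chi> i j. if i = j then (if i = 1 then 1 else -1) else 0)"

definition lie_hom_sl2 :: "(real^2^2 \<Rightarrow> real^'n^'n) \<Rightarrow> (real^'n^'n) set \<Rightarrow> bool" where
  "lie_hom_sl2 \<mu> g \<longleftrightarrow>
     \<mu> ` sl2 \<subseteq> g \<and>
     (\<forall>X\<in>sl2. \<forall>Y\<in>sl2. \<forall>s t. \<mu> (s *\<^sub>R X + t *\<^sub>R Y) = s *\<^sub>R \<mu> X + t *\<^sub>R \<mu> Y) \<and>
     (\<forall>X\<in>sl2. \<forall>Y\<in>sl2. \<mu> (sl2_bracket X Y) = lie_bracket (\<mu> X) (\<mu> Y))"

definition sl2_invariant :: "(real^2^2 \<Rightarrow> real^'n^'n) \<Rightarrow> (real^'n) set \<Rightarrow> bool" where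
  "sl2_invariant \<mu> V \<longleftrightarrow> subspace V \<and> (\<forall>X\<in>sl2. \<forall>v\<in>V. \<mu> X *v v \<in> V)"

definition sl2_irreducible :: "(real^2^2 \<Rightarrow> real^'n^'n) \<Rightarrow> (real^'n) set \<Rightarrow> bool" where
  "sl2_irreducible \<mu> V \<longleftrightarrow> sl2_invariant \<mu> V \<and> V \<noteq> {0} \<and>
     (\<forall>U. sl2_invariant \<mu> U \<and> U \<subseteq> V \<longrightarrow> U = {0} \<or> U = V)"

definition irred_decomposition :: "(real^2^2 \<Rightarrow> real^'n^'n) \<Rightarrow> (real^'n) set set \<Rightarrow> bool" where
  "irred_decomposition \<mu> \<V> \<longleftrightarrow> finite \<V> \<and>
     (\<forall>V\<in>\<V>. sl2_irreducible \<mu> V) \<and>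
     (\<forall>V\<in>\<V>. V \<inter> span (\<Union>(\<V> - {V})) = {0}) \<and>
     span (\<Union>\<V>) = UNIV"

definition highest_weight :: "(real^2^2 \<Rightarrow> real^'n^'n) \<Rightarrow> (real^'n) set \<Rightarrow> real" where
  "highest_weight \<mu> V = Max {w. \<exists>v\<in>V. v \<noteq> 0 \<and> \<mu> sl2_H *v v = w *\<^sub>R v}"

end

theory Submission
  imports Defs
begin

lemma eig_indep:
  fixes T :: "'a::real_vector \<Rightarrow> 'a"
  assumes lin: "linear T" and fin: "finite K"
    and ev: "\<forall>k\<in>K. T (v k) = lam k *\<^sub>R v k" and inj: "inj_on lam K"
  shows "(\<Sum>k\<in>K. c k *\<^sub>R v k) = 0 \<Longrightarrow> \<forall>k\<in>K. c k *\<^sub>R v k = 0"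
  using fin ev inj
proof (induction K arbitrary: c rule: finite_induct)
  case empty
  then show ?case by simp
next
  case (insert j K)
  have s: "c j *\<^sub>R v j + (\<Sum>k\<in>K. c k *\<^sub>R v k) = 0"
    using insert.prems(1) insert.hyps by simp
  have "T (c j *\<^sub>R v j + (\<Sum>k\<in>K. c k *\<^sub>R v k)) = 0" using s lin by (simp add: linear_0)
  hence t: "c j *\<^sub>R (lam j *\<^sub>R v j) + (\<Sum>k\<in>K. c k *\<^sub>R (lam k *\<^sub>R v k)) = 0"
    using insert.prems(2) lin by (simp add: linear_add linear_scale linear_sum)
  have s2: "lam j *\<^sub>R (c j *\<^sub>R v j + (\<Sum>k\<in>K. c k *\<^sub>R v k)) = 0" using s by simp
  have "(\<Sum>k\<in>K. (c k * (lam k - lam j)) *\<^sub>R v k) = 0"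
  proof -
    have "(\<Sum>k\<in>K. (c k * (lam k - lam j)) *\<^sub>R v k)
       = (c j *\<^sub>R (lam j *\<^sub>R v j) + (\<Sum>k\<in>K. c k *\<^sub>R (lam k *\<^sub>R v k)))
         - lam j *\<^sub>R (c j *\<^sub>R v j + (\<Sum>k\<in>K. c k *\<^sub>R v k))"
      by (simp add: scaleR_right.sum algebra_simps sum_subtractf[symmetric])
    then show ?thesis using t s2 by simp
  qed
  hence IH: "\<forall>k\<in>K. (c k * (lam k - lam j)) *\<^sub>R v k = 0"
    using insert.IH[of "\<lambda>k. c k * (lam k - lam j)"] insert.prems by auto
  have K0: "\<forall>k\<in>K. c k *\<^sub>R v k = 0"
  proof
    fix k assume k: "k \<in> K"
    have "lam k \<noteq> lam j" using insert.prems(3) insert.hyps k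
      by (metis inj_on_contraD insertCI)
    then show "c k *\<^sub>R v k = 0" using IH k by auto
  qed
  hence "(\<Sum>k\<in>K. c k *\<^sub>R v k) = 0" by (simp add: sum.neutral)
  hence "c j *\<^sub>R v j = 0" using s by simp
  then show ?case using K0 by simp
qed

lemma fin_eig:
  fixes T :: "'a::euclidean_space \<Rightarrow> 'a"
  assumes lin: "linear T"
  shows "finite {l. \<exists>v. v \<noteq> 0 \<and> T v = l *\<^sub>R v}"
proof (rule ccontr)
  let ?L = "{l. \<exists>v. v \<noteq> 0 \<and> T v = l *\<^sub>R v}"
  assume "infinite ?L"
  then obtain L where L: "L \<subseteq> ?L" "finite L" "card L = Suc DIM('a)"
    using infinite_arbitrarily_large by blast
  define v where "v l = (SOME v. v \<noteq> 0 \<and> T v = l *\<^sub>R v)" for l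
  have vp: "v l \<noteq> 0 \<and> T (v l) = l *\<^sub>R v l" if "l \<in> L" for l
  proof -
    have "\<exists>v. v \<noteq> 0 \<and> T v = l *\<^sub>R v" using L(1) that by auto
    then show ?thesis unfolding v_def by (rule someI_ex)
  qed
  have inj: "inj_on v L"
  proof (rule inj_onI)
    fix a b assume ab: "a \<in> L" "b \<in> L" "v a = v b"
    then have "a *\<^sub>R v a = b *\<^sub>R v a" using vp by metis
    then show "a = b" using vp[OF ab(1)] by simp
  qed
  have ind: "independent (v ` L)"
    unfolding independent_explicit
  proof (intro conjI allI impI ballI)
    show "finite (v ` L)" using L by simp
    fix c x assume s: "(\<Sum>x\<in>v ` L. c x *\<^sub>R x) = 0" and x: "x \<in> v ` L"
    have "(\<Sum>l\<in>L. c (v l) *\<^sub>R v l) = 0" using s inj by (simp add: sum.reindex)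
    then have "\<forall>l\<in>L. c (v l) *\<^sub>R v l = 0"
      using eig_indep[OF lin L(2), of v id "\<lambda>l. c (v l)"] vp by auto
    then show "c x = 0" using x vp by auto
  qed
  have "card (v ` L) \<le> dim (v ` L)" using independent_bound_general[OF ind] by simp
  also have "\<dots> \<le> DIM('a)" by (rule dim_subset_UNIV)
  finally show False using card_image[OF inj] L(3) by simp
qed

lemma scaleR_mv: "((c::real) *\<^sub>R A) *v (x::real^'n) = c *\<^sub>R (A *v x)"
  by (simp add: vec_eq_iff matrix_vector_mult_def sum_distrib_left mult.assoc)

lemma neg_mv: "(- A) *v (x::real^'n) = - (A *v x)"
  by (simp add: vec_eq_iff matrix_vector_mult_def sum_negf)

lemma mv_neg: "A *v (- x) = - (A *v (x::real^'n))"
  by (simp add: vec_eq_iff matrix_vector_mult_def sum_negf)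

lemma two_vec[simp]: "(2::real^'n) * v = 2 *\<^sub>R v"
  by (simp add: vec_eq_iff)

lemma funpow_lin: "linear (f::'a::real_vector \<Rightarrow> 'a) \<Longrightarrow> linear (f ^^ k)"
  by (induction k) (auto simp: linear_id id_def[symmetric] intro: linear_compose)

lemma nilp:
  fixes H E :: "real^'n^'n"
  assumes R: "\<And>x. H *v (E *v x) = E *v (H *v x) + c *\<^sub>R (E *v x)" and c: "c \<noteq> 0"
  shows "\<exists>k. \<forall>x. ((\<lambda>x. E *v x) ^^ k) x = 0"
proof -
  define e where "e = (\<lambda>x. E *v x)"
  have line: "linear e" unfolding e_def by simp
  have HE: "H *v (e ^^ k) x = (e ^^ k) (H *v x) + (real k * c) *\<^sub>R (e ^^ k) x" for k x
  proof (induction k)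
    case 0 then show ?case by simp
  next
    case (Suc k)
    have "H *v (e ^^ Suc k) x = H *v (E *v (e ^^ k) x)" by (simp add: e_def)
    also have "\<dots> = E *v (H *v (e ^^ k) x) + c *\<^sub>R (E *v (e ^^ k) x)" by (rule R)
    also have "\<dots> = E *v ((e ^^ k) (H *v x)) + (real k * c) *\<^sub>R (E *v (e ^^ k) x) + c *\<^sub>R (E *v (e ^^ k) x)"
      using Suc by (simp add: matrix_vector_right_distrib matrix_vector_mult_scaleR)
    also have "\<dots> = (e ^^ Suc k) (H *v x) + (real (Suc k) * c) *\<^sub>R (e ^^ Suc k) x"
      by (simp add: e_def algebra_simps)
    finally show ?case .
  qed
  define P where "P k = ((\<lambda>A. E ** A) ^^ k) (mat 1)" for k
  have Pv: "P k *v x = (e ^^ k) x" for k x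
    by (induction k arbitrary: x) (simp_all add: P_def e_def matrix_vector_mul_assoc[symmetric])
  define T where "T A = H ** A - A ** H" for A :: "real^'n^'n"
  have Tv: "T A *v x = H *v (A *v x) - A *v (H *v x)" for A x
    by (simp add: T_def matrix_vector_mult_diff_rdistrib matrix_vector_mul_assoc)
  have linT: "linear T"
  proof (rule linearI)
    fix A B :: "real^'n^'n" and r :: real
    show "T (A + B) = T A + T B"
      by (simp add: matrix_eq Tv matrix_vector_mult_add_rdistrib matrix_vector_right_distrib algebra_simps)
    show "T (r *\<^sub>R A) = r *\<^sub>R T A"
      by (simp add: matrix_eq Tv scaleR_mv matrix_vector_mult_scaleR algebra_simps)
  qed
  have TP: "T (P k) = (real k * c) *\<^sub>R P k" for k
    by (simp add: matrix_eq Tv scaleR_mv Pv HE)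
  show ?thesis
  proof (rule ccontr)
    assume "\<not> ?thesis"
    then have nz: "P k \<noteq> 0" for k
      by (metis Pv e_def matrix_vector_mult_0)
    have "range (\<lambda>k. real k * c) \<subseteq> {l. \<exists>v. v \<noteq> 0 \<and> T v = l *\<^sub>R v}"
      using nz TP by blast
    moreover have "infinite (range (\<lambda>k. real k * c))"
      using c by (intro range_inj_infinite) (auto simp: inj_def)
    ultimately show False using fin_eig[OF linT] finite_subset by blast
  qed
qed

locale trip =
  fixes H E F :: "real^'n^'n"
  assumes R1: "\<And>x. H *v (E *v x) = E *v (H *v x) + 2 *\<^sub>R (E *v x)"
    and R2: "\<And>x. H *v (F *v x) = F *v (H *v x) - 2 *\<^sub>R (F *v x)"
    and R3: "\<And>x. E *v (F *v x) = F *v (E *v x) + H *v x"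
begin

definition fp :: "nat \<Rightarrow> real^'n \<Rightarrow> real^'n" where
  "fp j = (\<lambda>x. F *v x) ^^ j"

lemma fp_lin: "linear (fp j)"
  unfolding fp_def by (rule funpow_lin) simp

lemma fp_add: "fp j (a + b) = fp j a + fp j b"
  and fp_scale: "fp j (r *\<^sub>R a) = r *\<^sub>R fp j a"
  and fp_diff: "fp j (a - b) = fp j a - fp j b"
  and fp_0: "fp j 0 = 0"
  using fp_lin[of j] by (simp_all add: linear_add linear_scale linear_diff linear_0)

lemma fp_Suc: "fp (Suc j) x = F *v fp j x"
  by (simp add: fp_def)

lemma fp_Suc': "fp (Suc j) x = fp j (F *v x)"
  by (simp add: fp_def funpow_Suc_right del: funpow.simps)

lemma HF: "H *v fp j z = fp j (H *v z) - (2 * real j) *\<^sub>R fp j z"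
proof (induction j)
  case 0 then show ?case by (simp add: fp_def)
next
  case (Suc j)
  have "H *v fp (Suc j) z = F *v (H *v fp j z) - 2 *\<^sub>R (F *v fp j z)"
    by (simp add: fp_Suc R2)
  also have "\<dots> = F *v (fp j (H *v z) - (2 * real j) *\<^sub>R fp j z) - 2 *\<^sub>R (F *v fp j z)"
    by (subst Suc) (rule refl)
  also have "\<dots> = fp (Suc j) (H *v z) - (2 * real (Suc j)) *\<^sub>R fp (Suc j) z"
    by (simp add: fp_Suc matrix_vector_mult_diff_distrib matrix_vector_mult_scaleR algebra_simps)
  finally show ?case .
qed

lemma EF: "E *v fp (Suc j) z = fp (Suc j) (E *v z) + (real j + 1) *\<^sub>R fp j (H *v z - real j *\<^sub>R z)"
proof (induction j)
  case 0 then show ?case by (simp add: fp_def R3)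
next
  case (Suc j)
  have "E *v fp (Suc (Suc j)) z = F *v (E *v fp (Suc j) z) + H *v fp (Suc j) z"
    by (simp add: fp_Suc R3)
  also have "\<dots> = F *v (fp (Suc j) (E *v z) + (real j + 1) *\<^sub>R fp j (H *v z - real j *\<^sub>R z))
      + (fp (Suc j) (H *v z) - (2 * real (Suc j)) *\<^sub>R fp (Suc j) z)"
    using Suc HF by simp
  also have "\<dots> = fp (Suc (Suc j)) (E *v z) + (real (Suc j) + 1) *\<^sub>R fp (Suc j) (H *v z - real (Suc j) *\<^sub>R z)"
    apply (simp only: fp_Suc matrix_vector_right_distrib matrix_vector_mult_diff_distrib matrix_vector_mult_scaleR fp_diff fp_scale fp_add)
    apply (simp add: algebra_simps)
    done
  finally show ?case .
qed

lemma string: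
  assumes x: "x \<noteq> 0" "E *v x = 0" "H *v x = m *\<^sub>R x" and nil: "\<exists>k. \<forall>y. fp k y = 0"
  shows "\<exists>w. w \<noteq> 0 \<and> H *v w = (- m) *\<^sub>R w"
proof -
  obtain k where k: "\<forall>y. fp k y = 0" using nil by blast
  have k0: "k \<noteq> 0"
  proof
    assume "k = 0" then show False using k x by (simp add: fp_def)
  qed
  then have ex: "\<exists>j. fp (Suc j) x = 0" using k by (metis not0_implies_Suc)
  define j0 where "j0 = (LEAST j. fp (Suc j) x = 0)"
  have j0: "fp (Suc j0) x = 0" unfolding j0_def using ex by (rule LeastI_ex)
  have nz: "fp j0 x \<noteq> 0"
  proof (cases j0)
    case 0 then show ?thesis using x by (simp add: fp_def)
  next
    case (Suc i)
    have "i < j0" using Suc by simp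
    then have "fp (Suc i) x \<noteq> 0" unfolding j0_def by (rule not_less_Least)
    then show ?thesis using Suc by simp
  qed
  have hx: "H *v x - real j0 *\<^sub>R x = (m - real j0) *\<^sub>R x" using x by (simp add: algebra_simps)
  have "0 = E *v fp (Suc j0) x" using j0 by simp
  also have "\<dots> = ((real j0 + 1) * (m - real j0)) *\<^sub>R fp j0 x"
    by (simp only: EF hx x(2) fp_0 fp_scale) simp
  finally have "(real j0 + 1) * (m - real j0) = 0" using nz by simp
  moreover have "real j0 + 1 \<noteq> 0" by (simp add: add_nonneg_eq_0_iff)
  ultimately have "m = real j0" by simp
  then have "H *v fp j0 x = (- m) *\<^sub>R fp j0 x"
    using x by (simp add: HF fp_scale algebra_simps)
  then show ?thesis using nz by blast
qed

lemma eig_exists: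
  assumes V: "subspace V" "V \<noteq> {0}"
    and inv: "\<And>v. v \<in> V \<Longrightarrow> H *v v \<in> V" "\<And>v. v \<in> V \<Longrightarrow> E *v v \<in> V"
      "\<And>v. v \<in> V \<Longrightarrow> F *v v \<in> V"
    and nilE: "\<exists>k. \<forall>x. ((\<lambda>x. E *v x) ^^ k) x = 0"
    and nilF: "\<exists>k. \<forall>y. fp k y = 0"
  shows "\<exists>w\<in>V. w \<noteq> 0 \<and> (\<exists>l. H *v w = l *\<^sub>R w)"
proof -
  obtain x where x: "x \<in> V" "x \<noteq> 0" using V subspace_0 by blast
  define e where "e = (\<lambda>x. E *v x)"
  obtain k where k: "\<forall>x. (e ^^ k) x = 0" using nilE e_def by blast
  have eV: "(e ^^ j) x \<in> V" for j
    by (induction j) (simp_all add: x e_def inv)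
  have k0: "k \<noteq> 0"
  proof
    assume "k = 0" then show False using k x by simp
  qed
  then have ex: "\<exists>j. (e ^^ Suc j) x = 0" using k by (metis not0_implies_Suc)
  define j0 where "j0 = (LEAST j. (e ^^ Suc j) x = 0)"
  have j0: "(e ^^ Suc j0) x = 0" unfolding j0_def using ex by (rule LeastI_ex)
  have nz: "(e ^^ j0) x \<noteq> 0"
  proof (cases j0)
    case 0 then show ?thesis using x by simp
  next
    case (Suc i)
    have "i < j0" using Suc by simp
    then have "(e ^^ Suc i) x \<noteq> 0" unfolding j0_def by (rule not_less_Least)
    then show ?thesis using Suc by simp
  qed
  define y where "y = (e ^^ j0) x"
  have y: "y \<in> V" "y \<noteq> 0" "E *v y = 0" using eV nz j0 by (auto simp: y_def e_def)
  have claim: "\<forall>z. z \<in> V \<longrightarrow> E *v z = 0 \<longrightarrow> z \<noteq> 0 \<longrightarrow> fp j z = 0 \<longrightarrow>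
      (\<exists>w\<in>V. w \<noteq> 0 \<and> (\<exists>l. H *v w = l *\<^sub>R w))" for j
  proof (induction j)
    case 0 then show ?case by (simp add: fp_def)
  next
    case (Suc j)
    show ?case
    proof (intro allI impI)
      fix z assume z: "z \<in> V" "E *v z = 0" "z \<noteq> 0" "fp (Suc j) z = 0"
      define z' where "z' = H *v z - real j *\<^sub>R z"
      show "\<exists>w\<in>V. w \<noteq> 0 \<and> (\<exists>l. H *v w = l *\<^sub>R w)"
      proof (cases "z' = 0")
        case True
        then have "H *v z = real j *\<^sub>R z" by (simp add: z'_def)
        then show ?thesis using z by blast
      next
        case False
        have z'V: "z' \<in> V" unfolding z'_def using z inv V(1)
          by (simp add: subspace_diff subspace_scale)
        have "E *v (H *v z) = H *v (E *v z) - 2 *\<^sub>R (E *v z)" using R1[of z] by simp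
        then have Ez': "E *v z' = 0" using z by (simp add: z'_def matrix_vector_mult_diff_distrib matrix_vector_mult_scaleR)
        have "0 = E *v fp (Suc j) z" using z by simp
        also have "\<dots> = (real j + 1) *\<^sub>R fp j z'" by (simp add: EF z(2) fp_0 z'_def)
        finally have "(real j + 1) *\<^sub>R fp j z' = 0" by simp
        moreover have "real j + 1 \<noteq> 0" by (simp add: add_nonneg_eq_0_iff)
        ultimately have "fp j z' = 0" by simp
        then show ?thesis using Suc z'V Ez' False by blast
      qed
    qed
  qed
  obtain kf where "\<forall>y. fp kf y = 0" using nilF by blast
  then show ?thesis using claim[of kf] y by blast
qed

end


definition e2 :: "real^2^2" where "e2 = (\<chi> i j. if i = 1 \<and> j = 2 then 1 else 0)"
definition f2 :: "real^2^2" where "f2 = (\<chi> i j. if i = 2 \<and> j = 1 then 1 else 0)"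
lemma sl2_mem: "e2 \<in> sl2" "f2 \<in> sl2" "sl2_H \<in> sl2"
  by (simp_all add: sl2_def e2_def f2_def sl2_H_def)
lemma sl2_br: "sl2_bracket sl2_H e2 = 2 *\<^sub>R e2" "sl2_bracket sl2_H f2 = (-2) *\<^sub>R f2"
   "sl2_bracket e2 f2 = sl2_H"
  by (simp_all add: sl2_bracket_def e2_def f2_def sl2_H_def vec_eq_iff matrix_matrix_mult_def UNIV_2 forall_2)

lemma br_vec: "lie_bracket A B = c *\<^sub>R B \<Longrightarrow> A *v (B *v x) = B *v (A *v x) + c *\<^sub>R (B *v (x::real^'n))"
proof -
  assume h: "lie_bracket A B = c *\<^sub>R B"
  have "(A ** B - B ** A) *v x = (c *\<^sub>R B) *v x" using h by (simp add: lie_bracket_def)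
  then show ?thesis by (simp add: matrix_vector_mult_diff_rdistrib matrix_vector_mul_assoc scaleR_mv algebra_simps)
qed

theorem lemma5p3:
  fixes g :: "(real^'n^'n) set"
    and wedge :: "real^'n \<Rightarrow> real^'n \<Rightarrow> real^'n \<Rightarrow> real"
    and \<mu> :: "real^2^2 \<Rightarrow> real^'n^'n"
  assumes ss: "semisimple g"
    and wedge_dual: "\<forall>a b. linear (wedge a b)"
    and wedge_lin: "\<forall>b c. linear (\<lambda>a. wedge a b c)"
    and wedge_sym: "\<forall>a b. wedge a b = wedge b a"
    and wedge_equiv: "\<forall>X\<in>g. \<forall>a b c.
        wedge (X *v a) b c + wedge a (X *v b) c = - wedge a b (X *v c)"
    and wedge_nonvan: "\<forall>U. subspace U \<and> dim U = 2 \<longrightarrow>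
        (\<exists>a\<in>U. \<exists>b\<in>U. \<exists>c. wedge a b c \<noteq> 0)"
    and hom: "lie_hom_sl2 \<mu> g"
    and inj: "inj_on \<mu> sl2"
  shows "\<forall>\<V>. irred_decomposition \<mu> \<V> \<longrightarrow>
           (\<forall>V\<in>\<V>. highest_weight \<mu> V \<le> 4) \<and>
           card {V\<in>\<V>. highest_weight \<mu> V = 4} \<le> 1"
proof -
  define H where "H = \<mu> sl2_H"
  define E where "E = \<mu> e2"
  define F where "F = \<mu> f2"
  have img: "\<mu> ` sl2 \<subseteq> g" and lin: "\<forall>X\<in>sl2. \<forall>Y\<in>sl2. \<forall>s t. \<mu> (s *\<^sub>R X + t *\<^sub>R Y) = s *\<^sub>R \<mu> X + t *\<^sub>R \<mu> Y"
    and bra: "\<forall>X\<in>sl2. \<forall>Y\<in>sl2. \<mu> (sl2_bracket X Y) = lie_bracket (\<mu> X) (\<mu> Y)"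
    using hom unfolding lie_hom_sl2_def by auto
  have Hg: "H \<in> g" using img sl2_mem unfolding H_def by auto
  have musc: "\<mu> (c *\<^sub>R X) = c *\<^sub>R \<mu> X" if "X \<in> sl2" for c X
    using lin that by (metis add.right_neutral scaleR_zero_left)
  have b1: "lie_bracket H E = 2 *\<^sub>R E"
    using bra sl2_mem sl2_br musc unfolding H_def E_def by metis
  have b2: "lie_bracket H F = (-2) *\<^sub>R F"
    using bra sl2_mem sl2_br musc unfolding H_def F_def by metis
  have b3: "lie_bracket E F = H"
    unfolding H_def E_def F_def using bra sl2_mem(1,2) sl2_br(3) by metis
  have R1: "H *v (E *v x) = E *v (H *v x) + 2 *\<^sub>R (E *v x)" for x using br_vec[OF b1] .
  have R2': "H *v (F *v x) = F *v (H *v x) + (-2) *\<^sub>R (F *v x)" for x using br_vec[OF b2] .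
  have R2: "H *v (F *v x) = F *v (H *v x) - 2 *\<^sub>R (F *v x)" for x using R2'[of x] by simp
  have R3: "E *v (F *v x) = F *v (E *v x) + H *v x" for x
  proof -
    have "(E ** F - F ** E) *v x = H *v x" using b3 by (simp add: lie_bracket_def)
    then show ?thesis by (simp add: matrix_vector_mult_diff_rdistrib matrix_vector_mul_assoc algebra_simps)
  qed
  interpret t: trip H E F using R1 R2 R3 by unfold_locales
  interpret t2: trip "-H" F E
    by unfold_locales (simp_all add: neg_mv mv_neg R1 R2 R3 algebra_simps)
  have nilE: "\<exists>k. \<forall>x. ((\<lambda>x. E *v x) ^^ k) x = 0" using nilp[of H E 2] R1 by simp
  have nilF: "\<exists>k. \<forall>x. t.fp k x = 0" using nilp[of H F "-2"] R2' unfolding t.fp_def by simp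
  have nilE2: "\<exists>k. \<forall>x. t2.fp k x = 0" using nilE unfolding t2.fp_def by simp
  define \<Lambda> where "\<Lambda> = {l. \<exists>v. v \<noteq> 0 \<and> H *v v = l *\<^sub>R v}"
  have finL: "finite \<Lambda>" unfolding \<Lambda>_def by (rule fin_eig) simp
  have Lne: "\<Lambda> \<noteq> {}"
  proof -
    have "(UNIV::(real^'n) set) \<noteq> {0}"
    proof
      assume "(UNIV::(real^'n) set) = {0}"
      then have "(1::real^'n) = 0" by blast
      then show False by (simp add: vec_eq_iff)
    qed
    then show ?thesis using t.eig_exists[of UNIV] nilE nilF unfolding \<Lambda>_def by auto
  qed
  define N where "N = Max \<Lambda>"
  have NL: "N \<in> \<Lambda>" and Nmax: "\<And>l. l \<in> \<Lambda> \<Longrightarrow> l \<le> N"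
    using finL Lne unfolding N_def by auto
  have LB: "-N \<le> l" if l: "l \<in> \<Lambda>" for l
  proof -
    define m where "m = Min \<Lambda>"
    have mL: "m \<in> \<Lambda>" and mmin: "\<And>l. l \<in> \<Lambda> \<Longrightarrow> m \<le> l"
      using finL Lne unfolding m_def by auto
    obtain u where u: "u \<noteq> 0" "H *v u = m *\<^sub>R u" using mL unfolding \<Lambda>_def by auto
    have "H *v (F *v u) = (m - 2) *\<^sub>R (F *v u)" using R2[of u] u by (simp add: matrix_vector_mult_scaleR algebra_simps)
    then have Fu: "F *v u = 0"
    proof -
      assume h: "H *v (F *v u) = (m - 2) *\<^sub>R (F *v u)"
      show ?thesis
      proof (rule ccontr)
        assume "F *v u \<noteq> 0"
        then have "m - 2 \<in> \<Lambda>" using h unfolding \<Lambda>_def by blast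
        then show False using mmin by fastforce
      qed
    qed
    have "(-H) *v u = (- m) *\<^sub>R u" using u by (simp add: neg_mv)
    then obtain w where w: "w \<noteq> 0" "(-H) *v w = (- (- m)) *\<^sub>R w"
      using t2.string[OF u(1) Fu _ nilE2] by blast
    then have "- (H *v w) = m *\<^sub>R w" by (simp add: neg_mv)
    then have "H *v w = (- m) *\<^sub>R w" by (metis minus_minus scaleR_minus_left)
    then have "- m \<in> \<Lambda>" using w unfolding \<Lambda>_def by blast
    then have "-m \<le> N" by (rule Nmax)
    then show ?thesis using mmin[OF l] by simp
  qed
  have WL: "wedge (u *\<^sub>R x + v *\<^sub>R y) z c = u * wedge x z c + v * wedge y z c" for u v x y z c
  proof -
    have l: "linear (\<lambda>a. wedge a z c)" using wedge_lin by blast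
    show ?thesis using linear_add[OF l, of "u *\<^sub>R x" "v *\<^sub>R y"]
      linear_scale[OF l, of u x] linear_scale[OF l, of v y] by simp
  qed
  have WS: "wedge (u *\<^sub>R x) z c = u * wedge x z c" for u x z c
    using WL[of u x 0 x z c] by simp
  have WZ: "\<forall>c. wedge a b c = 0"
    if a: "H *v a = p *\<^sub>R a" and b: "H *v b = q *\<^sub>R b" and nl: "-(p+q) \<notin> \<Lambda>" for a b p q
  proof
    fix c0
    have phi: "wedge a b (H *v c) = - (p + q) * wedge a b c" for c
    proof -
      have "wedge (H *v a) b c + wedge a (H *v b) c = - wedge a b (H *v c)"
        using wedge_equiv Hg by blast
      moreover have "wedge a (H *v b) c = q * wedge a b c"
        using b WS wedge_sym by metis
      ultimately show ?thesis using a WS by (simp add: algebra_simps)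
    qed
    define T where "T c = H *v c + (p + q) *\<^sub>R c" for c
    have linT: "linear T" unfolding T_def
      by (intro linear_compose_add linear_compose_scale_right) (simp_all add: linear_id[unfolded id_def])
    have "inj T"
    proof (rule injI)
      fix x y assume "T x = T y"
      then have "H *v (x - y) = (- (p + q)) *\<^sub>R (x - y)"
        unfolding T_def by (simp add: matrix_vector_mult_diff_distrib algebra_simps)
      then have "x - y = 0" using nl unfolding \<Lambda>_def by blast
      then show "x = y" by simp
    qed
    then have "surj T" using linT by (simp add: eucl.linear_inj_imp_surj)
    then obtain d where d: "c0 = T d" by blast
    have ld: "linear (wedge a b)" using wedge_dual by blast
    have "wedge a b c0 = wedge a b (H *v d) + (p + q) * wedge a b d"
      using ld by (simp add: d T_def linear_add linear_scale)
    then show "wedge a b c0 = 0" using phi by (simp add: algebra_simps)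
  qed
  have twoD: False
    if a0: "a \<noteq> 0" and bs: "b \<notin> span {a}" and z1: "\<forall>c. wedge a a c = 0"
      and z2: "\<forall>c. wedge a b c = 0" and z3: "\<forall>c. wedge b b c = 0" for a b
  proof -
    have ia: "independent {a}" using a0 by simp
    have ind: "independent (insert b {a})" by (rule independent_insertI[OF bs ia])
    have ba: "b \<noteq> a" using bs span_base[of a "{a}"] by auto
    have dU: "dim (span {b, a}) = 2"
      using dim_eq_card_independent[OF ind] ba by simp
    obtain x y c where xy: "x \<in> span {b, a}" "y \<in> span {b, a}" "wedge x y c \<noteq> 0"
      using wedge_nonvan dU subspace_span by blast
    have rep: "\<exists>k t. z = k *\<^sub>R b + t *\<^sub>R a" if "z \<in> span {b, a}" for z
    proof -
      have "\<exists>k. z - k *\<^sub>R b \<in> span {a}" using that span_breakdown_eq[of z b "{a}"] by simp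
      then obtain k where "z - k *\<^sub>R b \<in> span {a}" by blast
      then obtain t where "z - k *\<^sub>R b = t *\<^sub>R a" by (auto simp: span_singleton)
      then have "z = k *\<^sub>R b + t *\<^sub>R a" by (simp add: algebra_simps)
      then show ?thesis by blast
    qed
    have z2': "\<forall>c. wedge b a c = 0" using z2 wedge_sym by metis
    obtain k1 t1 where x: "x = k1 *\<^sub>R b + t1 *\<^sub>R a" using rep xy(1) by blast
    obtain k2 t2 where y: "y = k2 *\<^sub>R b + t2 *\<^sub>R a" using rep xy(2) by blast
    have "wedge b y c = wedge y b c" using wedge_sym by metis
    also have "\<dots> = k2 * wedge b b c + t2 * wedge a b c" using y WL by simp
    also have "\<dots> = 0" using z3 z2 by simp
    finally have "wedge b y c = 0" .
    moreover have "wedge a y c = wedge y a c" using wedge_sym by metis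
    moreover have "wedge y a c = k2 * wedge b a c + t2 * wedge a a c" using y WL by simp
    moreover have "k2 * wedge b a c + t2 * wedge a a c = 0" using z2' z1 by simp
    ultimately have "wedge x y c = 0" using x WL by simp
    then show False using xy(3) by simp
  qed
  have N4: "N \<le> 4"
  proof (rule ccontr)
    assume "\<not> N \<le> 4"
    then have N4: "N > 4" by simp
    obtain v where v: "v \<noteq> 0" "H *v v = N *\<^sub>R v" using NL unfolding \<Lambda>_def by auto
    have Ev: "E *v v = 0"
    proof (rule ccontr)
      assume "E *v v \<noteq> 0"
      moreover have "H *v (E *v v) = (N + 2) *\<^sub>R (E *v v)"
        using R1[of v] v by (simp add: matrix_vector_mult_scaleR algebra_simps)
      ultimately have "N + 2 \<in> \<Lambda>" unfolding \<Lambda>_def by blast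
      then show False using Nmax by fastforce
    qed
    have "E *v (F *v v) = N *\<^sub>R v" using R3[of v] Ev v by simp
    then have Fv: "F *v v \<noteq> 0" using v N4 by auto
    have HFv: "H *v (F *v v) = (N - 2) *\<^sub>R (F *v v)"
      using R2[of v] v by (simp add: matrix_vector_mult_scaleR algebra_simps)
    have Fs: "F *v v \<notin> span {v}"
    proof
      assume "F *v v \<in> span {v}"
      then obtain k where k: "F *v v = k *\<^sub>R v" by (auto simp: span_singleton)
      then have "H *v (F *v v) = N *\<^sub>R (F *v v)" using v by (simp add: matrix_vector_mult_scaleR)
      then have "(2::real) *\<^sub>R (F *v v) = 0" using HFv by (simp add: algebra_simps)
      then show False using Fv by simp
    qed
    have nl: "x \<notin> \<Lambda>" if "x < -N" for x using LB that by force
    show False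
    proof (rule twoD[OF v(1) Fs])
      show "\<forall>c. wedge v v c = 0" using WZ[OF v(2) v(2)] nl N4 by simp
      show "\<forall>c. wedge v (F *v v) c = 0" using WZ[OF v(2) HFv] nl N4 by simp
      show "\<forall>c. wedge (F *v v) (F *v v) c = 0" using WZ[OF HFv HFv] nl N4 by simp
    qed
  qed
  show ?thesis
  proof (intro allI impI)
    fix \<V> assume dec: "irred_decomposition \<mu> \<V>"
    then have finV: "finite \<V>" and irr: "\<And>V. V \<in> \<V> \<Longrightarrow> sl2_irreducible \<mu> V"
      and dsum: "\<And>V. V \<in> \<V> \<Longrightarrow> V \<inter> span (\<Union>(\<V> - {V})) = {0}"
      unfolding irred_decomposition_def by auto
    define S where "S V = {w. \<exists>v\<in>V. v \<noteq> 0 \<and> H *v v = w *\<^sub>R v}" for V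
    have hwS: "highest_weight \<mu> V \<in> S V" "highest_weight \<mu> V \<le> N" if V: "V \<in> \<V>" for V
    proof -
      have inv: "sl2_invariant \<mu> V" and nz: "V \<noteq> {0}" using irr[OF V] unfolding sl2_irreducible_def by auto
      then have sV: "subspace V" and cl: "\<And>X v. X \<in> sl2 \<Longrightarrow> v \<in> V \<Longrightarrow> \<mu> X *v v \<in> V"
        unfolding sl2_invariant_def by auto
      have "\<exists>w\<in>V. w \<noteq> 0 \<and> (\<exists>l. H *v w = l *\<^sub>R w)"
        using t.eig_exists[OF sV nz] cl sl2_mem nilE nilF unfolding H_def E_def F_def by blast
      then have ne: "S V \<noteq> {}" unfolding S_def by blast
      have sub: "S V \<subseteq> \<Lambda>" unfolding S_def \<Lambda>_def by blast
      have fin: "finite (S V)" using finite_subset[OF sub finL] .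
      have hw: "highest_weight \<mu> V = Max (S V)" unfolding highest_weight_def S_def H_def by simp
      show "highest_weight \<mu> V \<in> S V" using hw fin ne by simp
      then show "highest_weight \<mu> V \<le> N" using sub Nmax by blast
    qed
    show "(\<forall>V\<in>\<V>. highest_weight \<mu> V \<le> 4) \<and> card {V\<in>\<V>. highest_weight \<mu> V = 4} \<le> 1"
    proof
      show "\<forall>V\<in>\<V>. highest_weight \<mu> V \<le> 4" using hwS N4 by force
      have "finite {V\<in>\<V>. highest_weight \<mu> V = 4}" using finV by simp
      moreover have "\<forall>V1\<in>{V\<in>\<V>. highest_weight \<mu> V = 4}. \<forall>V2\<in>{V\<in>\<V>. highest_weight \<mu> V = 4}. V1 = V2"
      proof (intro ballI, rule ccontr)
        fix V1 V2 assume V1: "V1 \<in> {V\<in>\<V>. highest_weight \<mu> V = 4}" and V2: "V2 \<in> {V\<in>\<V>. highest_weight \<mu> V = 4}"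
          and ne: "V1 \<noteq> V2"
        have "4 \<in> S V1" "4 \<in> S V2" using hwS(1)[of V1] hwS(1)[of V2] V1 V2 by auto
        then obtain v1 v2 where v1: "v1 \<in> V1" "v1 \<noteq> 0" "H *v v1 = 4 *\<^sub>R v1"
          and v2: "v2 \<in> V2" "v2 \<noteq> 0" "H *v v2 = 4 *\<^sub>R v2" unfolding S_def by auto
        have N4': "N = 4" using hwS V1 N4 by force
        have sp: "v2 \<notin> span {v1}"
        proof
          assume "v2 \<in> span {v1}"
          then obtain k where k: "v2 = k *\<^sub>R v1" by (auto simp: span_singleton)
          have "v1 \<in> span (\<Union>(\<V> - {V2}))" using v1 V1 ne by (intro span_base) auto
          then have "v2 \<in> span (\<Union>(\<V> - {V2}))" using k span_mul by auto
          then have "v2 \<in> V2 \<inter> span (\<Union>(\<V> - {V2}))" using v2 by auto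
          then show False using dsum V2 v2 by auto
        qed
        have nl: "x \<notin> \<Lambda>" if "x < -N" for x using LB that by force
        show False
        proof (rule twoD[OF v1(2) sp])
          show "\<forall>c. wedge v1 v1 c = 0" using WZ[OF v1(3) v1(3)] nl N4' by simp
          show "\<forall>c. wedge v1 v2 c = 0" using WZ[OF v1(3) v2(3)] nl N4' by simp
          show "\<forall>c. wedge v2 v2 c = 0" using WZ[OF v2(3) v2(3)] nl N4' by simp
        qed
      qed
      ultimately have "card {V\<in>\<V>. highest_weight \<mu> V = 4} \<le> Suc 0"
        using card_le_Suc0_iff_eq by blast
      then show "card {V\<in>\<V>. highest_weight \<mu> V = 4} \<le> 1" by simp
    qed
  qed
qed

end
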